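(* Let $(\Omega,\mu)$ be a measure space with a $\sigma$-additive $\sigma$-finite measure, let $G$ be a discrete group, and let $\{\theta_g\}_{g\in G}$ be a group of (algebra) automorphisms of $L^\infty_\mu(\Omega)$ (with $\theta_{gh}=\theta_g\theta_h$). Let $M$ be the maximal ideal space of $L^\infty_\mu(\Omega)$, $\Gamma:L^\infty_\mu(\Omega)\to C(M)$ the Gelfand isomorphism, and let $t_g:M\to M$ be the homeomorphisms such that $\Gamma(\theta_g(z))(m)=\Gamma(z)(t_g^{-1}(m))$ for all $z\in L^\infty_\mu(\Omega)$, $m\in M$. For each class $\Delta$ of measurable sets (modulo null sets) define $\alpha_g(\Delta)$ by $\theta_g(\chi_\Delta)=\chi_{\alpha_g(\Delta)}$. Then the following are equivalent: (a) $G$ acts metrically freely, i.e. for every finite set $\{g_1,\dots,g_k\}\subset G$ and every measurable $\Delta$ with $\mu(\Delta)>0$ there exists a measurable $\Delta'\subset\Delta$ with $\mu(\Delta')>0$ and $\mu(\alpha_{g_i}(\Delta')\cap\alpha_{g_j}(\Delta'))=0$ for all $i\ne j$; (b) $G$ acts topologically freely on $M$, i.e. for every finite set $\{g_1,\dots,g_k\}\subset G$ and every nonempty open $U\subset M$ there exists a nonempty open $V\subset U$ with $t_{g_i}(V)\cap t_{g_j}(V)=\emptyset$ for all $i\neq j$.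
   Context: $\chi_\Delta$ denotes the characteristic function of $\Delta$ in $L^\infty_\mu(\Omega)$; since $\theta_g(\chi_\Delta)$ is again an idempotent of $L^\infty_\mu(\Omega)$, it is the characteristic function of a (class of) measurable set, which is denoted $\alpha_g(\Delta)$. $\mu(\Delta)>0$ iff $\chi_\Delta\neq 0$. *)

theory Defs
  imports "HOL-Analysis.Analysis" "HOL-Probability.Probability"
begin

text \<open>Elements of L^infinity_mu(Omega) are represented by essentially bounded
  measurable complex functions; equality in L^infinity is almost-everywhere equality.\<close>

definition Linf :: "'a measure \<Rightarrow> ('a \<Rightarrow> complex) set" where
  "Linf M = {f. f \<in> borel_measurable M \<and> (\<exists>C. AE x in M. norm (f x) \<le> C)}"

definition ae_eq :: "'a measure \<Rightarrow> ('a \<Rightarrow> complex) \<Rightarrow> ('a \<Rightarrow> complex) \<Rightarrow> bool" where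
  "ae_eq M f g \<longleftrightarrow> (AE x in M. f x = g x)"

definition Linf_automorphism :: "'a measure \<Rightarrow> (('a \<Rightarrow> complex) \<Rightarrow> ('a \<Rightarrow> complex)) \<Rightarrow> bool" where
  "Linf_automorphism M T \<longleftrightarrow>
     (\<forall>f\<in>Linf M. T f \<in> Linf M) \<and>
     (\<forall>f\<in>Linf M. \<forall>f'\<in>Linf M. ae_eq M f f' \<longrightarrow> ae_eq M (T f) (T f')) \<and>
     (\<forall>f\<in>Linf M. \<forall>f'\<in>Linf M. ae_eq M (T (\<lambda>x. f x + f' x)) (\<lambda>x. T f x + T f' x)) \<and>
     (\<forall>f\<in>Linf M. \<forall>c. ae_eq M (T (\<lambda>x. c * f x)) (\<lambda>x. c * T f x)) \<and>
     (\<forall>f\<in>Linf M. \<forall>f'\<in>Linf M. ae_eq M (T (\<lambda>x. f x * f' x)) (\<lambda>x. T f x * T f' x)) \<and>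
     ae_eq M (T (\<lambda>x. 1)) (\<lambda>x. 1) \<and>
     (\<forall>f\<in>Linf M. \<forall>f'\<in>Linf M. ae_eq M (T f) (T f') \<longrightarrow> ae_eq M f f') \<and>
     (\<forall>f\<in>Linf M. \<exists>h\<in>Linf M. ae_eq M (T h) f)"

definition Linf_group_action :: "'a measure \<Rightarrow> ('g::group_add \<Rightarrow> ('a \<Rightarrow> complex) \<Rightarrow> ('a \<Rightarrow> complex)) \<Rightarrow> bool" where
  "Linf_group_action M \<theta> \<longleftrightarrow>
     (\<forall>g. Linf_automorphism M (\<theta> g)) \<and>
     (\<forall>g h. \<forall>f\<in>Linf M. ae_eq M (\<theta> (g + h) f) (\<theta> g (\<theta> h f))) \<and>
     (\<forall>f\<in>Linf M. ae_eq M (\<theta> 0 f) f)"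

text \<open>Maximal ideal space of L^infinity, realised (Gelfand) as the set of characters,
  i.e. nonzero multiplicative linear functionals (normalised to 0 off Linf).\<close>

definition characters :: "'a measure \<Rightarrow> (('a \<Rightarrow> complex) \<Rightarrow> complex) set" where
  "characters M = {\<phi>.
     (\<forall>f. f \<notin> Linf M \<longrightarrow> \<phi> f = 0) \<and>
     (\<forall>f\<in>Linf M. \<forall>f'\<in>Linf M. ae_eq M f f' \<longrightarrow> \<phi> f = \<phi> f') \<and>
     (\<forall>f\<in>Linf M. \<forall>f'\<in>Linf M. \<phi> (\<lambda>x. f x + f' x) = \<phi> f + \<phi> f') \<and>
     (\<forall>f\<in>Linf M. \<forall>c. \<phi> (\<lambda>x. c * f x) = c * \<phi> f) \<and>
     (\<forall>f\<in>Linf M. \<forall>f'\<in>Linf M. \<phi> (\<lambda>x. f x * f' x) = \<phi> f * \<phi> f') \<and>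
     \<phi> (\<lambda>x. 1) = 1}"

text \<open>Gelfand (weak-star) topology on the maximal ideal space: the topology of
  pointwise convergence, i.e. the coarsest one making all Gelfand transforms
  Gamma(z) = (\<lambda>\<phi>. \<phi> z) continuous.\<close>

definition gelfand_top :: "'a measure \<Rightarrow> (('a \<Rightarrow> complex) \<Rightarrow> complex) topology" where
  "gelfand_top M = subtopology (product_topology (\<lambda>_. euclidean) UNIV) (characters M)"

definition gelfand :: "('a \<Rightarrow> complex) \<Rightarrow> (('a \<Rightarrow> complex) \<Rightarrow> complex) \<Rightarrow> complex" where
  "gelfand z m = m z"

definition alpha :: "'a measure \<Rightarrow> ('g \<Rightarrow> ('a \<Rightarrow> complex) \<Rightarrow> ('a \<Rightarrow> complex)) \<Rightarrow> 'g \<Rightarrow> 'a set \<Rightarrow> 'a set" where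
  "alpha M \<theta> g D = (SOME A. A \<in> sets M \<and> ae_eq M (\<theta> g (indicator D)) (indicator A))"

definition metrically_free :: "'a measure \<Rightarrow> ('g \<Rightarrow> ('a \<Rightarrow> complex) \<Rightarrow> ('a \<Rightarrow> complex)) \<Rightarrow> bool" where
  "metrically_free M \<theta> \<longleftrightarrow>
     (\<forall>F. finite F \<longrightarrow> (\<forall>D\<in>sets M. emeasure M D > 0 \<longrightarrow>
        (\<exists>D'\<in>sets M. D' \<subseteq> D \<and> emeasure M D' > 0 \<and>
           (\<forall>g\<in>F. \<forall>h\<in>F. g \<noteq> h \<longrightarrow> emeasure M (alpha M \<theta> g D' \<inter> alpha M \<theta> h D') = 0))))"

definition topologically_free :: "'b topology \<Rightarrow> ('g \<Rightarrow> 'b \<Rightarrow> 'b) \<Rightarrow> bool" where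
  "topologically_free X t \<longleftrightarrow>
     (\<forall>F. finite F \<longrightarrow> (\<forall>U. openin X U \<and> U \<noteq> {} \<longrightarrow>
        (\<exists>V. openin X V \<and> V \<noteq> {} \<and> V \<subseteq> U \<and>
           (\<forall>g\<in>F. \<forall>h\<in>F. g \<noteq> h \<longrightarrow> t g ` V \<inter> t h ` V = {}))))"

end

theory Submission imports Defs begin

lemma ex_ultra:
  fixes F :: "'a filter"
  assumes F: "F \<noteq> bot"
  shows "\<exists>U\<le>F. U \<noteq> bot \<and> (\<forall>P. eventually P U \<or> eventually (\<lambda>x. \<not> P x) U)"
proof -
  let ?R = "{(b, a). a \<noteq> bot \<and> a \<le> b \<and> b \<le> F}"
  have bot_notin_R: "c \<in> Chains ?R \<Longrightarrow> bot \<notin> c" for c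
    by (auto simp: Chains_def)
  have FR[simp]: "Field ?R = {G. G \<noteq> bot \<and> G \<le> F}"
    by (auto simp: Field_def bot_unique)
  have "\<exists>m\<in>Field ?R. \<forall>a\<in>Field ?R. (m, a) \<in> ?R \<longrightarrow> a = m"
  proof (rule Zorns_po_lemma)
    show "Partial_order ?R"
      by (auto simp: partial_order_on_def preorder_on_def
          antisym_def refl_on_def trans_def Field_def bot_unique)
    show "\<exists>u\<in>Field ?R. \<forall>a\<in>C. (a, u) \<in> ?R" if C: "C \<in> Chains ?R" for C
    proof (simp, intro exI conjI ballI)
      have Inf_C: "Inf C \<noteq> bot" "Inf C \<le> F" if "C \<noteq> {}"
      proof -
        from C that have "Inf C = bot \<longleftrightarrow> (\<exists>x\<in>C. x = bot)"
          unfolding trivial_limit_def by (intro eventually_Inf_base) (auto simp: Chains_def)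
        with C show "Inf C \<noteq> bot"
          by (simp add: bot_notin_R)
        from that obtain x where "x \<in> C" by auto
        with C show "Inf C \<le> F"
          by (auto intro!: Inf_lower2[of x] simp: Chains_def)
      qed
      then have [simp]: "inf F (Inf C) = (if C = {} then F else Inf C)"
        using C by (auto simp add: inf_absorb2)
      from C show "inf F (Inf C) \<noteq> bot"
        by (simp add: F Inf_C)
      from C show "inf F (Inf C) \<le> F"
        by (simp add: Chains_def Inf_C F)
      with C show "inf F (Inf C) \<le> x" "x \<le> F" if "x \<in> C" for x
        using that  by (auto intro: Inf_lower simp: Chains_def)
    qed
  qed
  then obtain U where U: "U \<noteq> bot" "U \<le> F" and max: "\<And>G. G \<noteq> bot \<Longrightarrow> G \<le> U \<Longrightarrow> G = U"
    by auto
  have "eventually P U \<or> eventually (\<lambda>x. \<not> P x) U" for P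
  proof (rule disjCI)
    assume "\<not> (\<forall>\<^sub>Fx in U. \<not> P x)"
    then have "inf U (principal {x. P x}) \<noteq> bot"
      by (simp add: trivial_limit_def eventually_inf_principal not_eventually)
    then have "inf U (principal {x. P x}) = U"
      by (rule max) simp
    moreover have "eventually P (inf U (principal {x. P x}))"
      by (simp add: eventually_inf_principal)
    ultimately show "eventually P U" by simp
  qed
  with U show ?thesis by blast
qed

lemma ultra_lim:
  fixes f :: "'a \<Rightarrow> complex"
  assumes U: "U \<noteq> bot" and ult: "\<And>P. eventually P U \<or> eventually (\<lambda>x. \<not> P x) U"
    and bd: "eventually (\<lambda>x. norm (f x) \<le> C) U"
  shows "\<exists>c. (f \<longlongrightarrow> c) U"
proof -
  have K: "compact (cball (0::complex) C)" by simp
  have "filtermap f U \<noteq> bot" using U by (simp add: filtermap_bot_iff)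
  moreover have "eventually (\<lambda>y. y \<in> cball 0 C) (filtermap f U)"
    using bd by (simp add: eventually_filtermap)
  ultimately obtain c where c: "inf (nhds c) (filtermap f U) \<noteq> bot"
    using K unfolding compact_filter by blast
  have "(f \<longlongrightarrow> c) U"
    unfolding tendsto_def
  proof (intro allI impI)
    fix S :: "complex set" assume S: "open S" "c \<in> S"
    show "eventually (\<lambda>x. f x \<in> S) U"
    proof (rule ccontr)
      assume "\<not> eventually (\<lambda>x. f x \<in> S) U"
      then have "eventually (\<lambda>x. f x \<notin> S) U" using ult by blast
      then have e1: "eventually (\<lambda>y. y \<notin> S) (filtermap f U)" by (simp add: eventually_filtermap)
      have e2: "eventually (\<lambda>y. y \<in> S) (nhds c)" using S eventually_nhds by blast
      have "eventually (\<lambda>y. False) (inf (nhds c) (filtermap f U))"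
        unfolding eventually_inf using e1 e2 by blast
      then show False using c by (simp add: eventually_False)
    qed
  qed
  then show ?thesis by blast
qed


lemma Linf_I: "f \<in> borel_measurable M \<Longrightarrow> (AE x in M. norm (f x) \<le> C) \<Longrightarrow> f \<in> Linf M"
  unfolding Linf_def by blast

lemma Linf_meas: "f \<in> Linf M \<Longrightarrow> f \<in> borel_measurable M"
  unfolding Linf_def by blast

lemma Linf_bd: "f \<in> Linf M \<Longrightarrow> \<exists>C\<ge>0. AE x in M. norm (f x) \<le> C"
proof -
  assume "f \<in> Linf M"
  then obtain C where "AE x in M. norm (f x) \<le> C" unfolding Linf_def by blast
  then have "AE x in M. norm (f x) \<le> max C 0" by eventually_elim auto
  then show ?thesis by (intro exI[of _ "max C 0"]) auto
qed

lemma Linf_add: "f \<in> Linf M \<Longrightarrow> g \<in> Linf M \<Longrightarrow> (\<lambda>x. f x + g x) \<in> Linf M"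
proof -
  assume f: "f \<in> Linf M" and g: "g \<in> Linf M"
  obtain C where C: "AE x in M. norm (f x) \<le> C" using Linf_bd[OF f] by blast
  obtain D where D: "AE x in M. norm (g x) \<le> D" using Linf_bd[OF g] by blast
  have "AE x in M. norm (f x + g x) \<le> C + D"
    using C D by eventually_elim (meson add_mono norm_triangle_ineq order_trans)
  then show ?thesis using Linf_meas[OF f] Linf_meas[OF g] by (intro Linf_I) auto
qed

lemma Linf_mult: "f \<in> Linf M \<Longrightarrow> g \<in> Linf M \<Longrightarrow> (\<lambda>x. f x * g x) \<in> Linf M"
proof -
  assume f: "f \<in> Linf M" and g: "g \<in> Linf M"
  obtain C where C: "C \<ge> 0" "AE x in M. norm (f x) \<le> C" using Linf_bd[OF f] by blast
  obtain D where D: "D \<ge> 0" "AE x in M. norm (g x) \<le> D" using Linf_bd[OF g] by blast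
  have "AE x in M. norm (f x * g x) \<le> C * D"
    using C(2) D(2) by eventually_elim (simp add: norm_mult mult_mono C D)
  then show ?thesis using Linf_meas[OF f] Linf_meas[OF g] by (intro Linf_I) auto
qed

lemma Linf_const: "(\<lambda>x. c) \<in> Linf M"
  by (rule Linf_I[of _ _ "norm c"]) auto

lemma Linf_cmult: "f \<in> Linf M \<Longrightarrow> (\<lambda>x. c * f x) \<in> Linf M"
  using Linf_mult[OF Linf_const] .

lemma Linf_ind: "A \<in> sets M \<Longrightarrow> (indicator A :: 'a \<Rightarrow> complex) \<in> Linf M"
  by (rule Linf_I[of _ _ 1]) (auto simp: indicator_def)

lemma char_exists:
  assumes D: "D \<in> sets M" and pos: "emeasure M D \<noteq> 0"
  shows "\<exists>\<phi>\<in>characters M. \<phi> (indicator D) = 1"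
proof -
  define F0 where "F0 = inf (ae_filter M) (principal D)"
  have "F0 \<noteq> bot"
  proof
    assume "F0 = bot"
    then have "eventually (\<lambda>x. False) F0" by simp
    then have "AE x in M. x \<notin> D" unfolding F0_def eventually_inf_principal by simp
    then have "D \<in> null_sets M" using AE_iff_null_sets[OF D] by simp
    then show False using pos by auto
  qed
  then obtain U where U: "U \<le> F0" "U \<noteq> bot" and ult: "\<And>P. eventually P U \<or> eventually (\<lambda>x. \<not> P x) U"
    using ex_ultra by blast
  have AEU: "eventually P U" if "AE x in M. P x" for P
    using U(1) that unfolding F0_def by (meson filter_leD inf_le1 order_trans)
  have lim: "(f \<longlongrightarrow> Lim U f) U" if fL: "f \<in> Linf M" for f :: "'a \<Rightarrow> complex"
  proof -
    obtain C where "AE x in M. norm (f x) \<le> C" using Linf_bd[OF fL] by blast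
    then obtain c where "(f \<longlongrightarrow> c) U" using ultra_lim[OF U(2) ult] AEU by blast
    then show ?thesis using tendsto_Lim U(2) by (metis)
  qed
  define \<phi> where "\<phi> f = (if f \<in> Linf M then Lim U f else 0)" for f :: "'a \<Rightarrow> complex"
  have tl: "(f \<longlongrightarrow> \<phi> f) U" if "f \<in> Linf M" for f
    using lim[OF that] that unfolding \<phi>_def by simp
  have uq: "\<phi> f = a" if "f \<in> Linf M" "(f \<longlongrightarrow> a) U" for f a
    using tendsto_unique[OF U(2) tl[OF that(1)] that(2)] .
  have "\<phi> \<in> characters M"
    unfolding characters_def
  proof (intro CollectI conjI ballI allI impI)
    show "\<phi> f = 0" if "f \<notin> Linf M" for f using that unfolding \<phi>_def by simp
    show "\<phi> f = \<phi> f'" if "f \<in> Linf M" "f' \<in> Linf M" "ae_eq M f f'" for f f'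
    proof -
      have "eventually (\<lambda>x. f x = f' x) U" using that(3) AEU unfolding ae_eq_def by blast
      then have "(f' \<longlongrightarrow> \<phi> f) U" using tl[OF that(1)] tendsto_cong by blast
      then show ?thesis using uq[OF that(2)] by simp
    qed
    show "\<phi> (\<lambda>x. f x + f' x) = \<phi> f + \<phi> f'" if "f \<in> Linf M" "f' \<in> Linf M" for f f'
      using that by (intro uq Linf_add tendsto_add tl)
    show "\<phi> (\<lambda>x. f x * f' x) = \<phi> f * \<phi> f'" if "f \<in> Linf M" "f' \<in> Linf M" for f f'
      using that by (intro uq Linf_mult tendsto_mult tl)
    show "\<phi> (\<lambda>x. c * f x) = c * \<phi> f" if "f \<in> Linf M" for f c
      using that by (intro uq Linf_cmult tendsto_mult tl tendsto_const)
    show "\<phi> (\<lambda>x. 1) = 1" by (intro uq Linf_const tendsto_const)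
  qed
  moreover have "\<phi> (indicator D) = 1"
  proof (rule uq[OF Linf_ind[OF D]])
    have "eventually (\<lambda>x. x \<in> D) F0" unfolding F0_def eventually_inf_principal by simp
    then have "eventually (\<lambda>x. x \<in> D) U" using U(1) filter_leD by blast
    then have "eventually (\<lambda>x. indicator D x = (1::complex)) U" by eventually_elim simp
    then show "((indicator D :: 'a \<Rightarrow> complex) \<longlongrightarrow> 1) U"
      using tendsto_cong[THEN iffD2, OF _ tendsto_const] by blast
  qed
  ultimately show ?thesis by blast
qed


context
  fixes M :: "'a measure" and \<phi> :: "('a \<Rightarrow> complex) \<Rightarrow> complex"
  assumes phi: "\<phi> \<in> characters M"
begin

lemma char_ae: "f \<in> Linf M \<Longrightarrow> f' \<in> Linf M \<Longrightarrow> ae_eq M f f' \<Longrightarrow> \<phi> f = \<phi> f'"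
  using phi unfolding characters_def by blast
lemma char_add: "f \<in> Linf M \<Longrightarrow> f' \<in> Linf M \<Longrightarrow> \<phi> (\<lambda>x. f x + f' x) = \<phi> f + \<phi> f'"
  using phi unfolding characters_def by blast
lemma char_mult: "f \<in> Linf M \<Longrightarrow> f' \<in> Linf M \<Longrightarrow> \<phi> (\<lambda>x. f x * f' x) = \<phi> f * \<phi> f'"
  using phi unfolding characters_def by blast
lemma char_cmult: "f \<in> Linf M \<Longrightarrow> \<phi> (\<lambda>x. c * f x) = c * \<phi> f"
  using phi unfolding characters_def by blast
lemma char_one: "\<phi> (\<lambda>x. 1) = 1"
  using phi unfolding characters_def by blast
lemma char_out: "f \<notin> Linf M \<Longrightarrow> \<phi> f = 0"
  using phi unfolding characters_def by blast

lemma char_const: "\<phi> (\<lambda>x. c) = c"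
  using char_cmult[OF Linf_const, of c 1] char_one by simp

lemma char_diff_const: "f \<in> Linf M \<Longrightarrow> \<phi> (\<lambda>x. f x - c) = \<phi> f - c"
  using char_add[OF _ Linf_const, of f "-c"] char_const[of "-c"] by simp

lemma char_bound:
  assumes f: "f \<in> Linf M" and bd: "AE x in M. norm (f x) \<le> r"
  shows "norm (\<phi> f) \<le> r"
proof (rule ccontr)
  assume "\<not> norm (\<phi> f) \<le> r"
  then have gt: "norm (\<phi> f) > r" by simp
  define c where "c = \<phi> f"
  define h where "h x = 1 / (f x - c)" for x
  have gt': "r < norm c" using gt c_def by simp
  have hm: "h \<in> borel_measurable M" unfolding h_def using Linf_meas[OF f] by (intro borel_measurable_divide borel_measurable_diff borel_measurable_const)
  have ne: "AE x in M. norm c - r \<le> norm (f x - c)"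
    using bd proof eventually_elim
    case (elim x)
    show ?case using elim norm_triangle_ineq2[of c "f x"] norm_minus_commute[of c "f x"] by linarith
  qed
  have "AE x in M. norm (h x) \<le> 1 / (norm c - r)"
    using ne proof eventually_elim
    case (elim x)
    have p: "0 < norm c - r" using gt' by simp
    have "norm (h x) = 1 / norm (f x - c)" by (simp add: h_def norm_divide)
    also have "\<dots> \<le> 1 / (norm c - r)" using elim p by (intro divide_left_mono mult_pos_pos) auto
    finally show ?case .
  qed
  then have hL: "h \<in> Linf M" using hm by (rule Linf_I[rotated])
  have "ae_eq M (\<lambda>x. (f x - c) * h x) (\<lambda>x. 1)"
    unfolding ae_eq_def using ne proof eventually_elim
    case (elim x)
    have "f x - c \<noteq> 0" using elim gt' by auto
    then show ?case by (simp add: h_def)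
  qed
  have fc: "(\<lambda>x. f x - c) \<in> Linf M" using Linf_add[OF f Linf_const, of "-c"] by simp
  have prodL: "(\<lambda>x. (f x - c) * h x) \<in> Linf M" using Linf_mult[OF fc hL] by simp
  then have "\<phi> (\<lambda>x. (f x - c) * h x) = \<phi> (\<lambda>x. 1)"
    using char_ae[OF prodL Linf_const] \<open>ae_eq M _ _\<close> by blast
  also have "\<phi> (\<lambda>x. (f x - c) * h x) = \<phi> (\<lambda>x. f x - c) * \<phi> h"
    using char_mult[OF fc hL] by simp
  also have "\<phi> (\<lambda>x. f x - c) = 0" using char_diff_const[OF f] c_def by simp
  finally show False using char_one by simp
qed

lemma char_zero: "\<phi> (\<lambda>x. 0) = 0"
  using char_const[of 0] .

lemma char_ind01: "A \<in> sets M \<Longrightarrow> \<phi> (indicator A) = 0 \<or> \<phi> (indicator A) = 1"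
proof -
  assume A: "A \<in> sets M"
  have "(\<lambda>x. indicator A x * indicator A x :: complex) = indicator A"
    by (auto simp: indicator_def fun_eq_iff)
  then have "\<phi> (indicator A) = \<phi> (indicator A) * \<phi> (indicator A)"
    using char_mult[OF Linf_ind[OF A] Linf_ind[OF A]] by simp
  then show ?thesis by (metis mult_cancel_right1 mult_eq_0_iff)
qed

lemma char_ind_inter: "A \<in> sets M \<Longrightarrow> B \<in> sets M \<Longrightarrow>
   \<phi> (indicator (A \<inter> B)) = \<phi> (indicator A) * \<phi> (indicator B)"
  using char_mult[OF Linf_ind Linf_ind, of A B] by (simp add: indicator_inter_arith[abs_def])

lemma char_ind_null: "A \<in> sets M \<Longrightarrow> emeasure M A = 0 \<Longrightarrow> \<phi> (indicator A) = 0"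
proof -
  assume A: "A \<in> sets M" "emeasure M A = 0"
  then have "AE x in M. x \<notin> A" using AE_iff_null_sets[OF A(1)] by auto
  then have "ae_eq M (indicator A) (\<lambda>x. 0)" unfolding ae_eq_def by eventually_elim simp
  then show ?thesis using char_ae[OF Linf_ind[OF A(1)] Linf_const] char_zero by simp
qed

lemma char_ind_space: "\<phi> (indicator (space M)) = 1"
proof -
  have "ae_eq M (indicator (space M)) (\<lambda>x. 1)" unfolding ae_eq_def by (rule AE_I2) simp
  then show ?thesis using char_ae[OF Linf_ind[OF sets.top] Linf_const] char_one by simp
qed

lemma char_ind_Inter: "finite I \<Longrightarrow> (\<forall>i\<in>I. D i \<in> sets M) \<Longrightarrow>
  space M \<inter> (\<Inter>i\<in>I. D i) \<in> sets M \<and> \<phi> (indicator (space M \<inter> (\<Inter>i\<in>I. D i))) = (\<Prod>i\<in>I. \<phi> (indicator (D i)))"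
proof (induction I rule: finite_induct)
  case empty
  then show ?case using char_ind_space by simp
next
  case (insert i I)
  have eq: "space M \<inter> (\<Inter>j\<in>insert i I. D j) = D i \<inter> (space M \<inter> (\<Inter>j\<in>I. D j))" by auto
  show ?case unfolding eq using insert char_ind_inter[of "D i" "space M \<inter> (\<Inter>j\<in>I. D j)"] by auto
qed

end


definition Cl :: "'a measure \<Rightarrow> 'a set \<Rightarrow> (('a \<Rightarrow> complex) \<Rightarrow> complex) set" where
  "Cl M D = {\<phi> \<in> characters M. \<phi> (indicator D) = 1}"

lemma topspace_gt: "topspace (gelfand_top M) = characters M"
  unfolding gelfand_top_def by simp

lemma Cl_sub: "Cl M D \<subseteq> characters M" unfolding Cl_def by auto

lemma Cl_inter: "A \<in> sets M \<Longrightarrow> B \<in> sets M \<Longrightarrow> Cl M (A \<inter> B) = Cl M A \<inter> Cl M B"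
  unfolding Cl_def
proof safe
  fix \<phi> assume p: "\<phi> \<in> characters M" and A: "A \<in> sets M" and B: "B \<in> sets M"
    and e: "\<phi> (indicator (A \<inter> B)) = 1"
  have eq: "\<phi> (indicator (A \<inter> B)) = \<phi> (indicator A) * \<phi> (indicator B)"
    using char_ind_inter[OF p A B] .
  show "\<phi> (indicator A) = 1" using e eq char_ind01[OF p A] by auto
  show "\<phi> (indicator B) = 1" using e eq char_ind01[OF p B] by auto
next
  fix \<phi> assume p: "\<phi> \<in> characters M" and A: "A \<in> sets M" and B: "B \<in> sets M"
    and "\<phi> (indicator A) = 1" "\<phi> (indicator B) = 1"
  then show "\<phi> (indicator (A \<inter> B)) = 1" using char_ind_inter[OF p A B] by simp
qed

lemma Cl_mono: "A \<in> sets M \<Longrightarrow> B \<in> sets M \<Longrightarrow> A \<subseteq> B \<Longrightarrow> Cl M A \<subseteq> Cl M B"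
  using Cl_inter[of A M B] by (metis Int_absorb2 inf.cobounded2 inf_commute)

lemma Cl_empty_iff: "D \<in> sets M \<Longrightarrow> Cl M D = {} \<longleftrightarrow> emeasure M D = 0"
  unfolding Cl_def using char_exists[of D M] char_ind_null[of _ M D] by force

lemma Cl_open: "D \<in> sets M \<Longrightarrow> openin (gelfand_top M) (Cl M D)"
proof -
  assume D: "D \<in> sets M"
  let ?P = "product_topology (\<lambda>_. euclidean) (UNIV :: ('a \<Rightarrow> complex) set) :: (('a \<Rightarrow> complex) \<Rightarrow> complex) topology"
  let ?T = "{x \<in> topspace ?P. x (indicator D) \<in> ball (1::complex) (1/2)}"
  have "openin ?P ?T"
    by (rule openin_continuous_map_preimage[OF continuous_map_product_projection]) auto
  moreover have "Cl M D = ?T \<inter> characters M"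
    unfolding Cl_def using char_ind01[OF _ D] by (auto simp: dist_norm) (metis norm_one mult.left_neutral cancel_comm_monoid_add_class.diff_cancel diff_zero one_less_numeral_iff semiring_norm(76) not_less_iff_gr_or_eq)
  ultimately show ?thesis unfolding gelfand_top_def openin_subtopology by blast
qed

lemma char_approx:
  assumes p: "\<phi> \<in> characters M" and f: "f \<in> Linf M" and e: "e > 0"
  shows "\<exists>D\<in>sets M. \<phi> (indicator D) = 1 \<and> (\<forall>\<psi>\<in>characters M. \<psi> (indicator D) = 1 \<longrightarrow> norm (\<psi> f - \<phi> f) < e)"
proof -
  define c where "c = \<phi> f"
  define D where "D = f -` ball c (e/2) \<inter> space M"
  have Ds: "D \<in> sets M" unfolding D_def using Linf_meas[OF f] by (intro measurable_sets borel_open) auto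
  define E where "E = space M - D"
  have Es: "E \<in> sets M" unfolding E_def using Ds by auto
  have "\<phi> (indicator D) = 1"
  proof (rule ccontr)
    assume "\<phi> (indicator D) \<noteq> 1"
    then have D0: "\<phi> (indicator D) = 0" using char_ind01[OF p Ds] by auto
    have "(\<lambda>x. indicator D x + indicator E x :: complex) = indicator (space M)"
      unfolding E_def D_def by (auto simp: fun_eq_iff indicator_def)
    then have "\<phi> (indicator D) + \<phi> (indicator E) = 1"
      using char_add[OF p Linf_ind[OF Ds] Linf_ind[OF Es]] char_ind_space[OF p] by simp
    then have E1: "\<phi> (indicator E) = 1" using D0 by simp
    define h where "h x = indicator E x / (f x - c)" for x
    have hm: "h \<in> borel_measurable M" unfolding h_def using Linf_meas[OF f] Es
      by (intro borel_measurable_divide borel_measurable_diff borel_measurable_const borel_measurable_indicator) auto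
    have bd: "norm (h x) \<le> 2 / e" for x
    proof (cases "x \<in> E")
      case True
      then have "e / 2 \<le> norm (f x - c)" unfolding E_def D_def by (auto simp: dist_norm norm_minus_commute)
      then have "1 / norm (f x - c) \<le> 1 / (e/2)" using e by (intro divide_left_mono mult_pos_pos) auto
      then show ?thesis using True by (simp add: h_def norm_divide)
    next
      case False
      then show ?thesis using e by (simp add: h_def)
    qed
    have hL: "h \<in> Linf M" using hm bd by (intro Linf_I[of _ _ "2/e"]) auto
    have fc: "(\<lambda>x. f x - c) \<in> Linf M" using Linf_add[OF f Linf_const, of "-c"] by simp
    have "(\<lambda>x. (f x - c) * h x) = indicator E"
    proof
      fix x show "(f x - c) * h x = indicator E x"
      proof (cases "x \<in> E")
        case True
        then have "e / 2 \<le> norm (f x - c)" unfolding E_def D_def by (auto simp: dist_norm norm_minus_commute)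
        then have "f x - c \<noteq> 0" using e by auto
        then show ?thesis using True by (simp add: h_def)
      qed (simp add: h_def)
    qed
    then have "\<phi> (indicator E) = \<phi> (\<lambda>x. f x - c) * \<phi> h"
      using char_mult[OF p fc hL] by simp
    also have "\<phi> (\<lambda>x. f x - c) = 0" using char_diff_const[OF p f] c_def by simp
    finally show False using E1 by simp
  qed
  moreover have "norm (\<psi> f - \<phi> f) < e" if q: "\<psi> \<in> characters M" "\<psi> (indicator D) = 1" for \<psi>
  proof -
    have fc: "(\<lambda>x. f x - c) \<in> Linf M" using Linf_add[OF f Linf_const, of "-c"] by simp
    have "\<psi> f - c = \<psi> (\<lambda>x. f x - c)" using char_diff_const[OF q(1) f] by simp
    also have "\<dots> = \<psi> (\<lambda>x. f x - c) * \<psi> (indicator D)" using q(2) by simp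
    also have "\<dots> = \<psi> (\<lambda>x. (f x - c) * indicator D x)" using char_mult[OF q(1) fc Linf_ind[OF Ds]] by simp
    finally have eq: "\<psi> f - c = \<psi> (\<lambda>x. (f x - c) * indicator D x)" .
    have "\<forall>x. norm ((f x - c) * indicator D x) \<le> e / 2"
      unfolding D_def using e by (auto simp: indicator_def dist_norm norm_minus_commute)
    then have "norm (\<psi> (\<lambda>x. (f x - c) * indicator D x)) \<le> e / 2"
      using Linf_mult[OF fc Linf_ind[OF Ds]] by (intro char_bound[OF q(1)] AE_I2) auto
    then show ?thesis using eq e c_def by simp
  qed
  ultimately show ?thesis using Ds by blast
qed


lemma Cl_base:
  assumes U: "openin (gelfand_top M) U" and pU: "\<phi> \<in> U"
  shows "\<exists>D\<in>sets M. \<phi> \<in> Cl M D \<and> Cl M D \<subseteq> U"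
proof -
  obtain T where T: "openin (product_topology (\<lambda>_. euclidean) UNIV) T" "U = T \<inter> characters M"
    using U unfolding gelfand_top_def openin_subtopology by blast
  have p: "\<phi> \<in> characters M" "\<phi> \<in> T" using pU T by auto
  obtain W where W: "finite {i \<in> UNIV. W i \<noteq> topspace euclidean}" "\<forall>i\<in>UNIV. openin euclidean (W i)"
    "\<phi> \<in> Pi\<^sub>E UNIV W" "Pi\<^sub>E UNIV W \<subseteq> T"
    using T(1) p(2) unfolding openin_product_topology_alt by blast
  define J where "J = {i. W i \<noteq> UNIV} \<inter> Linf M"
  have J: "finite J" using W(1) unfolding J_def by auto
  have "\<forall>i\<in>J. \<exists>D. D \<in> sets M \<and> \<phi> (indicator D) = 1 \<and>
           (\<forall>\<psi>\<in>characters M. \<psi> (indicator D) = 1 \<longrightarrow> \<psi> i \<in> W i)"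
  proof
    fix i assume i: "i \<in> J"
    have "open (W i)" using W(2) by auto
    moreover have "\<phi> i \<in> W i" using W(3) by auto
    ultimately obtain e where e: "e > 0" "ball (\<phi> i) e \<subseteq> W i" using open_contains_ball by blast
    obtain D where D: "D \<in> sets M" "\<phi> (indicator D) = 1"
      "\<forall>\<psi>\<in>characters M. \<psi> (indicator D) = 1 \<longrightarrow> norm (\<psi> i - \<phi> i) < e"
      using char_approx[OF p(1) _ e(1), of i] i unfolding J_def by blast
    have "\<forall>\<psi>\<in>characters M. \<psi> (indicator D) = 1 \<longrightarrow> \<psi> i \<in> W i"
    proof (intro ballI impI)
      fix \<psi> assume "\<psi> \<in> characters M" "\<psi> (indicator D) = 1"
      then have "norm (\<psi> i - \<phi> i) < e" using D(3) by blast
      then have "dist (\<phi> i) (\<psi> i) < e" by (simp add: dist_norm norm_minus_commute)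
      then show "\<psi> i \<in> W i" using e(2) by auto
    qed
    then show "\<exists>D. D \<in> sets M \<and> \<phi> (indicator D) = 1 \<and>
           (\<forall>\<psi>\<in>characters M. \<psi> (indicator D) = 1 \<longrightarrow> \<psi> i \<in> W i)"
      using D(1,2) by blast
  qed
  then obtain Df where Df: "\<And>i. i \<in> J \<Longrightarrow> Df i \<in> sets M" "\<And>i. i \<in> J \<Longrightarrow> \<phi> (indicator (Df i)) = 1"
    "\<And>i \<psi>. i \<in> J \<Longrightarrow> \<psi> \<in> characters M \<Longrightarrow> \<psi> (indicator (Df i)) = 1 \<Longrightarrow> \<psi> i \<in> W i"
    by metis
  define D0 where "D0 = space M \<inter> (\<Inter>i\<in>J. Df i)"
  have D0: "D0 \<in> sets M" "\<phi> (indicator D0) = (\<Prod>i\<in>J. \<phi> (indicator (Df i)))"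
    using char_ind_Inter[OF p(1) J, of Df] Df(1) unfolding D0_def by auto
  have "\<phi> \<in> Cl M D0" using D0(2) Df(2) p(1) unfolding Cl_def by simp
  moreover have "Cl M D0 \<subseteq> U"
  proof
    fix \<psi> assume q: "\<psi> \<in> Cl M D0"
    have qc: "\<psi> \<in> characters M" using q unfolding Cl_def by auto
    have "\<psi> \<in> Pi\<^sub>E UNIV W"
    proof (rule PiE_I)
      fix i show "\<psi> i \<in> W i"
      proof (cases "W i = UNIV")
        case False
        show ?thesis
        proof (cases "i \<in> Linf M")
          case True
          then have iJ: "i \<in> J" using False unfolding J_def by auto
          have "Cl M D0 \<subseteq> Cl M (Df i)" using Cl_mono[OF D0(1) Df(1)[OF iJ]] iJ unfolding D0_def by auto
          then have "\<psi> (indicator (Df i)) = 1" using q unfolding Cl_def by auto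
          then show ?thesis using Df(3)[OF iJ qc] by simp
        next
          case False
          then have "\<psi> i = \<phi> i" using char_out[OF qc] char_out[OF p(1)] by simp
          then show ?thesis using W(3) by auto
        qed
      qed simp
    qed simp
    then show "\<psi> \<in> U" using W(4) T(2) qc by auto
  qed
  ultimately show ?thesis using D0(1) by blast
qed

lemma idem01: "(z::complex) = z * z \<Longrightarrow> z = 0 \<or> z = 1"
  by (metis mult_cancel_right1 mult_eq_0_iff)

lemma alpha_ex:
  assumes T: "Linf_automorphism M T" and D: "D \<in> sets M"
  shows "\<exists>A. A \<in> sets M \<and> ae_eq M (T (indicator D)) (indicator A)"
proof -
  define e where "e = T (indicator D)"
  have eL: "e \<in> Linf M" using T Linf_ind[OF D] unfolding Linf_automorphism_def e_def by blast
  have "ae_eq M (T (\<lambda>x. indicator D x * indicator D x)) (\<lambda>x. e x * e x)"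
    using T Linf_ind[OF D] unfolding Linf_automorphism_def e_def by blast
  moreover have "(\<lambda>x. indicator D x * indicator D x :: complex) = indicator D"
    by (auto simp: indicator_def fun_eq_iff)
  ultimately have ee: "AE x in M. e x = e x * e x" unfolding ae_eq_def e_def by simp
  define A where "A = e -` {1} \<inter> space M"
  have As: "A \<in> sets M" unfolding A_def using Linf_meas[OF eL] by (intro measurable_sets borel_closed) auto
  have "AE x in M. e x = indicator A x"
    using ee AE_space proof eventually_elim
    case (elim x)
    then show ?case using idem01[of "e x"] by (auto simp: A_def indicator_def)
  qed
  then show ?thesis using As unfolding ae_eq_def e_def by blast
qed

lemma alpha_prop:
  assumes T: "Linf_automorphism M (\<theta> g)" and D: "D \<in> sets M"
  shows "alpha M \<theta> g D \<in> sets M \<and> ae_eq M (\<theta> g (indicator D)) (indicator (alpha M \<theta> g D))"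
  unfolding alpha_def using someI_ex[OF alpha_ex[OF T D]] .

lemma transport:
  assumes T: "Linf_automorphism M (\<theta> g)" and D: "D \<in> sets M"
    and hom: "homeomorphic_map (gelfand_top M) (gelfand_top M) f"
    and rel: "\<And>z m. z \<in> Linf M \<Longrightarrow> m \<in> characters M \<Longrightarrow>
           gelfand (\<theta> g z) m = gelfand z (inv_into (characters M) f m)"
  shows "f ` Cl M D = Cl M (alpha M \<theta> g D)"
proof -
  let ?X = "characters M"
  have surj: "f ` ?X = ?X" using homeomorphic_imp_surjective_map[OF hom] topspace_gt by metis
  have inj: "inj_on f ?X" using homeomorphic_imp_injective_map[OF hom] topspace_gt by metis
  let ?A = "alpha M \<theta> g D"
  have A: "?A \<in> sets M" "ae_eq M (\<theta> g (indicator D)) (indicator ?A)" using alpha_prop[of M \<theta> g D, OF T D] by auto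
  have tL: "\<theta> g (indicator D) \<in> Linf M" using T Linf_ind[OF D] unfolding Linf_automorphism_def by blast
  have key: "inv_into ?X f m (indicator D) = m (indicator ?A)" if m: "m \<in> ?X" for m
  proof -
    have "inv_into ?X f m (indicator D) = m (\<theta> g (indicator D))"
      using rel[OF Linf_ind[OF D] m] unfolding gelfand_def by simp
    also have "\<dots> = m (indicator ?A)" using char_ae[OF m tL Linf_ind[OF A(1)] A(2)] .
    finally show ?thesis .
  qed
  show ?thesis
  proof safe
    fix c assume c: "c \<in> Cl M D"
    then have cX: "c \<in> ?X" using Cl_sub by blast
    have fc: "f c \<in> ?X" using surj cX by blast
    have "inv_into ?X f (f c) = c" using inv_into_f_f[OF inj cX] .
    then show "f c \<in> Cl M ?A" using key[OF fc] c fc unfolding Cl_def by auto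
  next
    fix m assume m: "m \<in> Cl M ?A"
    then have mX: "m \<in> ?X" using Cl_sub by blast
    then have m': "m \<in> f ` ?X" using surj by simp
    have "inv_into ?X f m \<in> Cl M D"
      using key[OF mX] m inv_into_into[OF m'] unfolding Cl_def by auto
    moreover have "m = f (inv_into ?X f m)" using f_inv_into_f[OF m'] by simp
    ultimately show "m \<in> f ` Cl M D" by blast
  qed
qed


theorem mainTheorem2:
  fixes M :: "'a measure"
    and \<theta> :: "'g::group_add \<Rightarrow> ('a \<Rightarrow> complex) \<Rightarrow> ('a \<Rightarrow> complex)"
    and t :: "'g \<Rightarrow> (('a \<Rightarrow> complex) \<Rightarrow> complex) \<Rightarrow> (('a \<Rightarrow> complex) \<Rightarrow> complex)"
  assumes "sigma_finite_measure M"
    and "Linf_group_action M \<theta>"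
    and "\<And>g. homeomorphic_map (gelfand_top M) (gelfand_top M) (t g)"
    and "\<And>g z m. z \<in> Linf M \<Longrightarrow> m \<in> characters M \<Longrightarrow>
           gelfand (\<theta> g z) m = gelfand z (inv_into (characters M) (t g) m)"
  shows "metrically_free M \<theta> \<longleftrightarrow> topologically_free (gelfand_top M) t"
proof -
  have aut: "Linf_automorphism M (\<theta> g)" for g using assms(2) unfolding Linf_group_action_def by blast
  have tr: "t g ` Cl M D = Cl M (alpha M \<theta> g D)" if "D \<in> sets M" for g D
    by (rule transport[of M \<theta> g D "t g", OF aut that assms(3) assms(4)])
  have As: "alpha M \<theta> g D \<in> sets M" if "D \<in> sets M" for g D
    using alpha_prop[of M \<theta> g D, OF aut that] by blast
  have pos: "0 < emeasure M D \<longleftrightarrow> Cl M D \<noteq> {}" if "D \<in> sets M" for D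
    using Cl_empty_iff[OF that] by (simp add: zero_less_iff_neq_zero)
  have disj: "t g ` Cl M D \<inter> t h ` Cl M D = {} \<longleftrightarrow> emeasure M (alpha M \<theta> g D \<inter> alpha M \<theta> h D) = 0"
    if "D \<in> sets M" for g h D
  proof -
    have "t g ` Cl M D \<inter> t h ` Cl M D = Cl M (alpha M \<theta> g D) \<inter> Cl M (alpha M \<theta> h D)"
      using tr[OF that, of g] tr[OF that, of h] by simp
    also have "\<dots> = Cl M (alpha M \<theta> g D \<inter> alpha M \<theta> h D)"
      using Cl_inter[OF As[OF that] As[OF that]] by simp
    finally show ?thesis using Cl_empty_iff[OF sets.Int[OF As[OF that] As[OF that]]] by simp
  qed
  show ?thesis
  proof
    assume mf: "metrically_free M \<theta>"
    show "topologically_free (gelfand_top M) t"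
      unfolding topologically_free_def
    proof (intro allI impI)
      fix F :: "'g set" and U assume F: "finite F" and U: "openin (gelfand_top M) U \<and> U \<noteq> {}"
      then obtain \<phi> where ph: "\<phi> \<in> U" by blast
      obtain D where D: "D \<in> sets M" "\<phi> \<in> Cl M D" "Cl M D \<subseteq> U" using Cl_base[OF conjunct1[OF U] ph] by blast
      have Dp: "0 < emeasure M D" using pos[OF D(1)] D(2) by blast
      have "\<exists>D'\<in>sets M. D' \<subseteq> D \<and> emeasure M D' > 0 \<and>
        (\<forall>g\<in>F. \<forall>h\<in>F. g \<noteq> h \<longrightarrow> emeasure M (alpha M \<theta> g D' \<inter> alpha M \<theta> h D') = 0)"
        using mf[unfolded metrically_free_def, rule_format, OF F D(1) Dp] .
      then obtain D' where D': "D' \<in> sets M" "D' \<subseteq> D" "emeasure M D' > 0"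
        "\<forall>g\<in>F. \<forall>h\<in>F. g \<noteq> h \<longrightarrow> emeasure M (alpha M \<theta> g D' \<inter> alpha M \<theta> h D') = 0"
        by blast
      show "\<exists>V. openin (gelfand_top M) V \<and> V \<noteq> {} \<and> V \<subseteq> U \<and>
           (\<forall>g\<in>F. \<forall>h\<in>F. g \<noteq> h \<longrightarrow> t g ` V \<inter> t h ` V = {})"
      proof (intro exI conjI)
        show "openin (gelfand_top M) (Cl M D')" using Cl_open[OF D'(1)] .
        show "Cl M D' \<noteq> {}" using pos[OF D'(1)] D'(3) by blast
        show "Cl M D' \<subseteq> U" using Cl_mono[OF D'(1) D(1) D'(2)] D(3) by blast
        show "\<forall>g\<in>F. \<forall>h\<in>F. g \<noteq> h \<longrightarrow> t g ` Cl M D' \<inter> t h ` Cl M D' = {}"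
        proof (intro ballI impI)
          fix g h assume "g \<in> F" "h \<in> F" "g \<noteq> h"
          then have "emeasure M (alpha M \<theta> g D' \<inter> alpha M \<theta> h D') = 0" using D'(4) by blast
          then show "t g ` Cl M D' \<inter> t h ` Cl M D' = {}" using disj[OF D'(1), of g h] by simp
        qed
      qed
    qed
  next
    assume tf: "topologically_free (gelfand_top M) t"
    show "metrically_free M \<theta>"
      unfolding metrically_free_def
    proof (intro allI impI ballI)
      fix F :: "'g set" and D assume F: "finite F" and D: "D \<in> sets M" and Dp: "0 < emeasure M D"
      have "openin (gelfand_top M) (Cl M D) \<and> Cl M D \<noteq> {}" using Cl_open[OF D] pos[OF D] Dp by blast
      from tf[unfolded topologically_free_def, rule_format, OF F this]
      obtain V where V: "openin (gelfand_top M) V" "V \<noteq> {}" "V \<subseteq> Cl M D"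
        "\<forall>g\<in>F. \<forall>h\<in>F. g \<noteq> h \<longrightarrow> t g ` V \<inter> t h ` V = {}"
        by blast
      then obtain \<phi> where ph: "\<phi> \<in> V" by blast
      obtain D1 where D1: "D1 \<in> sets M" "\<phi> \<in> Cl M D1" "Cl M D1 \<subseteq> V" using Cl_base[OF V(1) ph] by blast
      define D' where "D' = D1 \<inter> D"
      have D's: "D' \<in> sets M" using D1(1) D unfolding D'_def by auto
      have ClD': "Cl M D' = Cl M D1" using Cl_inter[OF D1(1) D] D1(3) V(3) unfolding D'_def by blast
      show "\<exists>D'\<in>sets M. D' \<subseteq> D \<and> 0 < emeasure M D' \<and>
              (\<forall>g\<in>F. \<forall>h\<in>F. g \<noteq> h \<longrightarrow> emeasure M (alpha M \<theta> g D' \<inter> alpha M \<theta> h D') = 0)"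
      proof (intro bexI conjI ballI impI)
        show "D' \<subseteq> D" unfolding D'_def by auto
        show "0 < emeasure M D'" using pos[OF D's] ClD' D1(2) by auto
        fix g h assume "g \<in> F" "h \<in> F" "g \<noteq> h"
        then have "t g ` V \<inter> t h ` V = {}" using V(4) by blast
        then have "t g ` Cl M D' \<inter> t h ` Cl M D' = {}" using ClD' D1(3) by blast
        then show "emeasure M (alpha M \<theta> g D' \<inter> alpha M \<theta> h D') = 0" using disj[OF D's, of g h] by simp
      qed (rule D's)
    qed
  qed
qed

end
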